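(* Let $0<\beta<\mu$ and $0<v_0<x_0$, and set $V(s)=v_0e^{\beta s}$. For $t>0$ let $$x_t(s)=\frac{v_0e^{\beta t}\sinh(\mu s)+x_0\sinh(\mu(t-s))}{\sinh(\mu t)},\qquad s\ge0,$$ (so $x_t(0)=x_0$, $x_t(t)=V(t)$). Define $$\phi_2(s)=\Big(1-\frac{\beta}{\mu}\Big)e^{(\beta+\mu)s}+\Big(1+\frac{\beta}{\mu}\Big)e^{(\beta-\mu)s}.$$ Then the equation $\phi_2(t)=2x_0/v_0$ has a unique positive solution $t_2$, and $$\operatorname{sgn}\big(x_t'(t)-V'(t)\big)=\begin{cases}-1 & t<t_2,\\ 0 & t=t_2,\\ +1 & t>t_2.\end{cases}$$ Moreover $t_1<t^o_V<t_2$, where $t_1=\frac{1}{\mu+\beta}\log\frac{x_0}{v_0}$ and $t^o_V$ is the unique positive solution of $\big(1-\frac{\beta}{\mu}\big)e^{(\mu+\beta)t}+\frac{\beta}{\mu}e^{(\beta-\mu)t}=\frac{x_0}{v_0}$.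
   Context: $x_t'(t)$ denotes the derivative of $s\mapsto x_t(s)$ evaluated at $s=t$. *)

theory Defs
  imports "HOL-Analysis.Analysis"
begin

definition Vfun :: "real \<Rightarrow> real \<Rightarrow> real \<Rightarrow> real" where
  "Vfun v0 \<beta> s = v0 * exp (\<beta> * s)"

definition xt :: "real \<Rightarrow> real \<Rightarrow> real \<Rightarrow> real \<Rightarrow> real \<Rightarrow> real \<Rightarrow> real" where
  "xt \<beta> \<mu> v0 x0 t s =
     (v0 * exp (\<beta> * t) * sinh (\<mu> * s) + x0 * sinh (\<mu> * (t - s))) / sinh (\<mu> * t)"

definition phi2 :: "real \<Rightarrow> real \<Rightarrow> real \<Rightarrow> real" where
  "phi2 \<beta> \<mu> s = (1 - \<beta>/\<mu>) * exp ((\<beta> + \<mu>) * s) + (1 + \<beta>/\<mu>) * exp ((\<beta> - \<mu>) * s)"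

definition phiV :: "real \<Rightarrow> real \<Rightarrow> real \<Rightarrow> real" where
  "phiV \<beta> \<mu> t = (1 - \<beta>/\<mu>) * exp ((\<mu> + \<beta>) * t) + (\<beta>/\<mu>) * exp ((\<beta> - \<mu>) * t)"

end

theory Submission
  imports Defs
begin

lemma phi2_deriv:
  "((phi2 b m) has_real_derivative ((m*m - b*b)/m * (exp ((b+m)*u) - exp ((b-m)*u)))) (at u)"
  if "0 < m"
proof -
  have m: "m \<noteq> 0" using that by simp
  have "((phi2 b m) has_real_derivative ((1 - b/m) * (exp ((b + m) * u) * (b+m)) + (1 + b/m) * (exp ((b - m) * u) * (b-m)))) (at u)"
    unfolding phi2_def[abs_def] using m by (auto intro!: derivative_eq_intros)
  moreover have "(1 - b/m) * (exp ((b + m) * u) * (b+m)) + (1 + b/m) * (exp ((b - m) * u) * (b-m))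
     = (m*m - b*b)/m * (exp ((b+m)*u) - exp ((b-m)*u))"
    using m by (simp add: field_simps)
  ultimately show ?thesis by simp
qed

lemma phiV_deriv:
  "((phiV b m) has_real_derivative ((m - b)/m * ((m+b) * exp ((m+b)*u) - b * exp ((b-m)*u)))) (at u)"
  if "0 < m"
proof -
  have m: "m \<noteq> 0" using that by simp
  have "((phiV b m) has_real_derivative ((1 - b/m) * (exp ((m + b) * u) * (m+b)) + (b/m) * (exp ((b - m) * u) * (b-m)))) (at u)"
    unfolding phiV_def[abs_def] using m by (auto intro!: derivative_eq_intros)
  moreover have "(1 - b/m) * (exp ((m + b) * u) * (m+b)) + (b/m) * (exp ((b - m) * u) * (b-m))
     = (m - b)/m * ((m+b) * exp ((m+b)*u) - b * exp ((b-m)*u))"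
    using m by (simp add: field_simps)
  ultimately show ?thesis by simp
qed

lemma phi2_mono:
  assumes "0 < b" "b < m" "0 \<le> x" "x < y"
  shows "phi2 b m x < phi2 b m y"
proof (rule DERIV_pos_imp_increasing_open[OF assms(4)])
  fix u assume u: "x < u" "u < y"
  have "exp ((b-m)*u) < exp ((b+m)*u)" using u assms by (simp add: mult_strict_right_mono)
  moreover have "(m*m - b*b)/m > 0" using assms by (simp add: mult_strict_mono')
  ultimately have "(m*m - b*b)/m * (exp ((b+m)*u) - exp ((b-m)*u)) > 0" by (intro mult_pos_pos) auto
  moreover have "0 < m" using assms by simp
  ultimately show "\<exists>d. (phi2 b m has_real_derivative d) (at u) \<and> 0 < d"
    using phi2_deriv[of m b u] by blast
next
  show "continuous_on {x..y} (phi2 b m)" unfolding phi2_def by (intro continuous_intros)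
qed

lemma phiV_mono:
  assumes "0 < b" "b < m" "0 \<le> x" "x < y"
  shows "phiV b m x < phiV b m y"
proof (rule DERIV_pos_imp_increasing_open[OF assms(4)])
  fix u assume u: "x < u" "u < y"
  have e1: "exp ((b-m)*u) \<le> 1" using u assms by (simp add: mult_nonpos_nonneg)
  have e2: "1 \<le> exp ((m+b)*u)" using u assms by simp
  have "b * exp ((b-m)*u) \<le> b" using e1 assms by (simp add: mult_left_le)
  moreover have "m+b \<le> (m+b) * exp ((m+b)*u)" using e2 assms by (simp add: mult_le_cancel_left1)
  ultimately have "b * exp ((b-m)*u) < (m+b) * exp ((m+b)*u)" using assms by linarith
  then have "(m - b)/m * ((m+b) * exp ((m+b)*u) - b * exp ((b-m)*u)) > 0" using assms by simp
  moreover have "0 < m" using assms by simp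
  ultimately show "\<exists>d. (phiV b m has_real_derivative d) (at u) \<and> 0 < d"
    using phiV_deriv[of m b u] by blast
next
  show "continuous_on {x..y} (phiV b m)" unfolding phiV_def by (intro continuous_intros)
qed

lemma xt_deriv:
  assumes "0 < m" "0 < t"
  shows "deriv (xt b m v0 x0 t) t = (v0 * exp (b*t) * m * cosh (m*t) - x0 * m) / sinh (m*t)"
proof -
  have "((xt b m v0 x0 t) has_real_derivative
     (v0 * exp (b*t) * (cosh (m*t) * m) + x0 * (cosh (m*(t-t)) * (m * (0 - 1)))) / sinh (m*t)) (at t)"
    unfolding xt_def[abs_def] using assms by (auto intro!: derivative_eq_intros)
  then show ?thesis by (intro DERIV_imp_deriv) (simp add: algebra_simps)
qed

lemma V_deriv: "deriv (Vfun v0 b) t = v0 * exp (b*t) * b"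
proof -
  have "((Vfun v0 b) has_real_derivative v0 * (exp (b*t) * (b * 1))) (at t)"
    unfolding Vfun_def[abs_def] by (auto intro!: derivative_eq_intros)
  then have "((Vfun v0 b) has_real_derivative v0 * exp (b*t) * b) (at t)" by (simp add: mult.assoc)
  then show ?thesis by (intro DERIV_imp_deriv)
qed

lemma key_identity:
  assumes "0 < m" "0 < t"
  shows "(v0 * exp (b*t) * m * cosh (m*t) - x0 * m) / sinh (m*t) - v0 * exp (b*t) * b
    = m / sinh (m*t) * (v0/2 * phi2 b m t - x0)"
proof -
  have S: "sinh (m*t) > 0" using assms by simp
  define E P Q where "E = exp (b*t)" "P = exp (m*t)" "Q = exp (-(m*t))"
  have c: "cosh (m*t) = (P+Q)/2" and s: "sinh (m*t) = (P-Q)/2"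
    unfolding E_P_Q_def by (simp_all add: cosh_def sinh_def)
  have p: "phi2 b m t = (1 - b/m) * (E*P) + (1 + b/m) * (E*Q)"
    unfolding phi2_def E_P_Q_def by (simp add: algebra_simps flip: exp_add)
  have "(v0 * E * m * cosh (m*t) - x0 * m) - v0 * E * b * sinh (m*t)
    = m * (v0/2 * phi2 b m t - x0)"
    unfolding p c s using assms by (simp add: field_simps)
  then have eq: "(v0 * exp (b*t) * m * cosh (m*t) - x0 * m) - v0 * exp (b*t) * b * sinh (m*t)
    = m * (v0/2 * phi2 b m t - x0)" unfolding E_P_Q_def .
  have "(v0 * exp (b*t) * m * cosh (m*t) - x0 * m) / sinh (m*t) - v0 * exp (b*t) * b
     = ((v0 * exp (b*t) * m * cosh (m*t) - x0 * m) - v0 * exp (b*t) * b * sinh (m*t)) / sinh (m*t)"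
    using S by (simp add: field_simps del: sinh_real_zero_iff sinh_real_pos_iff)
  also have "\<dots> = m / sinh (m*t) * (v0/2 * phi2 b m t - x0)" unfolding eq by simp
  finally show ?thesis .
qed
lemma ivt_pos:
  fixes f :: "real \<Rightarrow> real"
  assumes "continuous_on {0..T} f" "f 0 < c" "c \<le> f T" "0 \<le> T"
  shows "\<exists>t>0. f t = c"
proof -
  obtain t where "0 \<le> t" "t \<le> T" "f t = c" using IVT'[of f 0 c T] assms by force
  moreover have "t \<noteq> 0" using assms \<open>f t = c\<close> by auto
  ultimately show ?thesis by (intro exI[of _ t]) auto
qed

lemma phi2_ex:
  assumes "0 < b" "b < m" "2 < c"
  shows "\<exists>t>0. phi2 b m t = c"
proof -
  have k: "(1 - b/m) * (b+m) > 0" using assms by (simp add: field_simps mult_strict_mono')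
  have k1: "1 - b/m > 0" using assms by (simp add: field_simps)
  define T where "T = c / ((1 - b/m) * (b+m))"
  have T: "T > 0" unfolding T_def using k assms by simp
  have "phi2 b m T \<ge> (1 - b/m) * exp ((b+m)*T)"
    unfolding phi2_def using assms k1 by (simp add: field_simps add_pos_pos)
  also have "(1 - b/m) * exp ((b+m)*T) \<ge> (1 - b/m) * ((b+m)*T)"
    using k1 exp_ge_add_one_self[of "(b+m)*T"] by (intro mult_left_mono) linarith+
  also have "(1 - b/m) * ((b+m)*T) = c" unfolding T_def using k by (simp add: field_simps)
  finally have "c \<le> phi2 b m T" .
  moreover have "phi2 b m 0 = 2" unfolding phi2_def by simp
  ultimately show ?thesis using T assms
    by (intro ivt_pos[of T]) (auto simp: phi2_def intro!: continuous_intros)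
qed

lemma phiV_ex:
  assumes "0 < b" "b < m" "1 < c"
  shows "\<exists>t>0. phiV b m t = c"
proof -
  have k: "(1 - b/m) * (m+b) > 0" using assms by (simp add: field_simps mult_strict_mono')
  have k1: "1 - b/m > 0" using assms by (simp add: field_simps)
  define T where "T = c / ((1 - b/m) * (m+b))"
  have T: "T > 0" unfolding T_def using k assms by simp
  have "phiV b m T \<ge> (1 - b/m) * exp ((m+b)*T)"
    unfolding phiV_def using assms k1 by simp
  also have "(1 - b/m) * exp ((m+b)*T) \<ge> (1 - b/m) * ((m+b)*T)"
    using k1 exp_ge_add_one_self[of "(m+b)*T"] by (intro mult_left_mono) linarith+
  also have "(1 - b/m) * ((m+b)*T) = c" unfolding T_def using k by (simp add: field_simps)
  finally have "c \<le> phiV b m T" .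
  moreover have "phiV b m 0 = 1" unfolding phiV_def by simp
  ultimately show ?thesis using T assms
    by (intro ivt_pos[of T]) (auto simp: phiV_def intro!: continuous_intros)
qed

lemma mono_le:
  assumes "\<And>x y. 0 \<le> x \<Longrightarrow> x < y \<Longrightarrow> (f::real\<Rightarrow>real) x < f y" "0 \<le> x" "0 \<le> y"
  shows "f x < f y \<longleftrightarrow> x < y" "f x = f y \<longleftrightarrow> x = y"
  using assms(1)[of x y] assms(1)[of y x] assms(2,3) by (cases x y rule: linorder_cases; auto)+

theorem proposition1:
  fixes \<beta> \<mu> v0 x0 :: real
  assumes "0 < \<beta>" "\<beta> < \<mu>" "0 < v0" "v0 < x0"
  shows "(\<exists>!t2. 0 < t2 \<and> phi2 \<beta> \<mu> t2 = 2 * x0 / v0) \<and>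
    (\<forall>t2 t. 0 < t2 \<and> phi2 \<beta> \<mu> t2 = 2 * x0 / v0 \<and> 0 < t \<longrightarrow>
           sgn (deriv (xt \<beta> \<mu> v0 x0 t) t - deriv (Vfun v0 \<beta>) t) =
             (if t < t2 then -1 else if t = t2 then 0 else 1)) \<and>
    (\<exists>!tV. 0 < tV \<and> phiV \<beta> \<mu> tV = x0 / v0) \<and>
    (\<forall>t2 tV. 0 < t2 \<and> phi2 \<beta> \<mu> t2 = 2 * x0 / v0 \<and>
           0 < tV \<and> phiV \<beta> \<mu> tV = x0 / v0 \<longrightarrow>
           1 / (\<mu> + \<beta>) * ln (x0 / v0) < tV \<and> tV < t2)"
proof -
  have m: "0 < \<mu>" using assms by simp
  have M2: "\<And>x y. 0 \<le> x \<Longrightarrow> x < y \<Longrightarrow> phi2 \<beta> \<mu> x < phi2 \<beta> \<mu> y"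
    using phi2_mono assms(1,2) by blast
  have MV: "\<And>x y. 0 \<le> x \<Longrightarrow> x < y \<Longrightarrow> phiV \<beta> \<mu> x < phiV \<beta> \<mu> y"
    using phiV_mono assms(1,2) by blast
  have c1: "1 < x0 / v0" using assms by simp
  have c2: "2 < 2 * x0 / v0" using assms by (simp add: field_simps)
  have P1: "\<exists>!t2. 0 < t2 \<and> phi2 \<beta> \<mu> t2 = 2 * x0 / v0"
  proof -
    obtain t where "t > 0" "phi2 \<beta> \<mu> t = 2 * x0 / v0" using phi2_ex[OF assms(1,2) c2] by blast
    moreover have "x = y" if "0 < x" "0 < y" "phi2 \<beta> \<mu> x = phi2 \<beta> \<mu> y" for x y
      using M2[of x y] M2[of y x] that by (cases x y rule: linorder_cases) auto
    ultimately show ?thesis by (intro ex1I[of _ t]) auto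
  qed
  have P3: "\<exists>!tV. 0 < tV \<and> phiV \<beta> \<mu> tV = x0 / v0"
  proof -
    obtain t where "t > 0" "phiV \<beta> \<mu> t = x0 / v0" using phiV_ex[OF assms(1,2) c1] by blast
    moreover have "x = y" if "0 < x" "0 < y" "phiV \<beta> \<mu> x = phiV \<beta> \<mu> y" for x y
      using MV[of x y] MV[of y x] that by (cases x y rule: linorder_cases) auto
    ultimately show ?thesis by (intro ex1I[of _ t]) auto
  qed
  have P2: "sgn (deriv (xt \<beta> \<mu> v0 x0 t) t - deriv (Vfun v0 \<beta>) t) =
             (if t < t2 then -1 else if t = t2 then 0 else 1)"
    if t2: "0 < t2" "phi2 \<beta> \<mu> t2 = 2 * x0 / v0" and t: "0 < t" for t2 t
  proof -
    have "deriv (xt \<beta> \<mu> v0 x0 t) t - deriv (Vfun v0 \<beta>) t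
       = \<mu> / sinh (\<mu>*t) * (v0/2 * phi2 \<beta> \<mu> t - x0)"
      using xt_deriv[OF m t] V_deriv key_identity[OF m t] by simp
    also have "v0/2 * phi2 \<beta> \<mu> t - x0 = v0/2 * (phi2 \<beta> \<mu> t - phi2 \<beta> \<mu> t2)"
      using t2 assms by (simp add: field_simps)
    finally have eq: "deriv (xt \<beta> \<mu> v0 x0 t) t - deriv (Vfun v0 \<beta>) t
       = (\<mu> / sinh (\<mu>*t) * (v0/2)) * (phi2 \<beta> \<mu> t - phi2 \<beta> \<mu> t2)" by simp
    have k: "\<mu> / sinh (\<mu>*t) * (v0/2) > 0" using m t assms by simp
    have "sgn (phi2 \<beta> \<mu> t - phi2 \<beta> \<mu> t2) = (if t < t2 then -1 else if t = t2 then 0 else 1)"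
      using M2[of t t2] M2[of t2 t] t t2(1) by (cases t t2 rule: linorder_cases) (auto simp: sgn_if)
    moreover have ks: "sgn (\<mu> / sinh (\<mu>*t) * (v0/2)) = 1" using sgn_pos[OF k] .
    ultimately show ?thesis unfolding eq sgn_mult[of "\<mu> / sinh (\<mu>*t) * (v0/2)"] ks by simp
  qed
  have P4: "1 / (\<mu> + \<beta>) * ln (x0 / v0) < tV \<and> tV < t2"
    if t2: "0 < t2" "phi2 \<beta> \<mu> t2 = 2 * x0 / v0" and tV: "0 < tV" "phiV \<beta> \<mu> tV = x0 / v0" for t2 tV
  proof
    define t1 where "t1 = 1 / (\<mu> + \<beta>) * ln (x0 / v0)"
    have t1: "t1 > 0" unfolding t1_def using c1 assms by simp
    have E: "exp ((\<mu>+\<beta>) * t1) = x0 / v0" unfolding t1_def using c1 assms by simp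
    have "exp ((\<beta>-\<mu>) * t1) < exp ((\<mu>+\<beta>) * t1)" using t1 assms by (simp add: mult_strict_right_mono)
    then have "(\<beta>/\<mu>) * exp ((\<beta>-\<mu>) * t1) < (\<beta>/\<mu>) * exp ((\<mu>+\<beta>) * t1)" using assms by (intro mult_strict_left_mono) auto
    then have "phiV \<beta> \<mu> t1 < x0 / v0" unfolding phiV_def E[symmetric] by (simp add: algebra_simps)
    then have "phiV \<beta> \<mu> t1 < phiV \<beta> \<mu> tV" using tV by simp
    then show "1 / (\<mu> + \<beta>) * ln (x0 / v0) < tV" proof -
      have "t1 < tV"
      proof (rule ccontr)
        assume "\<not> t1 < tV"
        then have "tV = t1 \<or> tV < t1" by auto
        then show False using MV[of tV t1] tV \<open>phiV \<beta> \<mu> t1 < phiV \<beta> \<mu> tV\<close> by auto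
      qed
      then show ?thesis unfolding t1_def .
    qed
  next
    have "exp ((\<beta>-\<mu>) * t2) < exp ((\<mu>+\<beta>) * t2)" using t2 assms by (simp add: mult_strict_right_mono)
    moreover have "1 - \<beta>/\<mu> > 0" using assms by (simp add: field_simps)
    ultimately have "(1 - \<beta>/\<mu>) * (exp ((\<mu>+\<beta>) * t2) - exp ((\<beta>-\<mu>) * t2)) > 0" by simp
    moreover have "2 * phiV \<beta> \<mu> t2 - phi2 \<beta> \<mu> t2 = (1 - \<beta>/\<mu>) * (exp ((\<mu>+\<beta>) * t2) - exp ((\<beta>-\<mu>) * t2))"
      unfolding phiV_def phi2_def by (simp add: algebra_simps)
    ultimately have "phiV \<beta> \<mu> t2 > x0 / v0" using t2 by simp
    then have "phiV \<beta> \<mu> tV < phiV \<beta> \<mu> t2" using tV by simp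
    show "tV < t2" proof (rule ccontr)
      assume "\<not> tV < t2"
      then have "t2 = tV \<or> t2 < tV" by auto
      then show False using MV[of t2 tV] t2 \<open>phiV \<beta> \<mu> tV < phiV \<beta> \<mu> t2\<close> by auto
    qed
  qed
  show ?thesis using P1 P2 P3 P4 by blast
qed

end
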